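(* Fix $\varepsilon>0$ and consider the $q$-stage multistep Frank–Wolfe method (defined in the context) applied to minimizing over $[-1,1]$ the function $f(\mathbf x)=\mathbf x^2/2$ if $|\mathbf x|<\varepsilon$, $\varepsilon\mathbf x-\varepsilon^2/2$ if $\mathbf x\ge\varepsilon$, $-\varepsilon\mathbf x-\varepsilon^2/2$ if $\mathbf x\le-\varepsilon$, with $\mathrm{LMO}(\mathbf x)=-\mathrm{sign}(\mathbf x)$ and $\mathbf x_0=1$. Assume $0<q\mathbf P^{(k)}\beta<1$ entrywise for all $k$. Then there exist a finite $\tilde k$ and a constant $C_2\ge0$ such that $|\mathbf x_k|\le\frac{C_2}{k}$ for all $k>\tilde k$.
   Context: The method has parameters $A\in\mathbb R^{q\times q}$ strictly lower triangular, $\beta\in\mathbb R^q$ with $\sum_i\beta_i=1$, $\omega\in\mathbb R^q$ with $\omega_1=0$, $c>0$; given $\mathbf x_k$ it computes for $i=1,\dots,q$: $\bar{\mathbf x}_i=\mathbf x_k+\sum_jA_{ij}\xi_j$, $\xi_i=\frac{c}{c+k+\omega_i}(\mathrm{LMO}(\bar{\mathbf x}_i)-\bar{\mathbf x}_i)$, and $\mathbf x_{k+1}=\mathbf x_k+\sum_i\beta_i\xi_i$. Here $\Gamma^{(k)}=\mathrm{diag}\big(\frac{c}{c+k+\omega_i}\big)$ and $\mathbf P^{(k)}=\Gamma^{(k)}(I+A^T\Gamma^{(k)})^{-1}$. *)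

theory Defs
  imports "HOL-Analysis.Analysis" "Jordan_Normal_Form.Gauss_Jordan_Elimination"
begin

text \<open>Objective from the paper (documentation only; the method only uses the LMO).\<close>
definition mfw_f :: "real \<Rightarrow> real \<Rightarrow> real" where
  "mfw_f eps x = (if \<bar>x\<bar> < eps then x^2/2
                  else if x \<ge> eps then eps*x - eps^2/2 else -eps*x - eps^2/2)"

definition lmo :: "real \<Rightarrow> real" where
  "lmo x = - sgn x"

text \<open>Stage indices i = 0..q-1 (paper: 1..q). Step size gamma_i^(k) = c/(c+k+omega_i).\<close>
definition gam :: "real \<Rightarrow> real vec \<Rightarrow> nat \<Rightarrow> nat \<Rightarrow> real" where
  "gam c \<omega> k i = c / (c + real k + \<omega> $ i)"

definition Gam :: "nat \<Rightarrow> real \<Rightarrow> real vec \<Rightarrow> nat \<Rightarrow> real mat" where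
  "Gam q c \<omega> k = mat q q (\<lambda>(i,j). if i = j then gam c \<omega> k i else 0)"

definition Pmat :: "nat \<Rightarrow> real mat \<Rightarrow> real \<Rightarrow> real vec \<Rightarrow> nat \<Rightarrow> real mat" where
  "Pmat q A c \<omega> k = Gam q c \<omega> k * the (mat_inverse (one_mat q + transpose_mat A * Gam q c \<omega> k))"

fun mfw_stages :: "real mat \<Rightarrow> real \<Rightarrow> real vec \<Rightarrow> nat \<Rightarrow> real \<Rightarrow> nat \<Rightarrow> real list" where
  "mfw_stages A c \<omega> k x 0 = []"
| "mfw_stages A c \<omega> k x (Suc i) =
     (let l = mfw_stages A c \<omega> k x i;
          xb = x + (\<Sum>j<i. A $$ (i,j) * l ! j)
      in l @ [gam c \<omega> k i * (lmo xb - xb)])"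

definition mfw_step :: "nat \<Rightarrow> real mat \<Rightarrow> real vec \<Rightarrow> real \<Rightarrow> real vec \<Rightarrow> nat \<Rightarrow> real \<Rightarrow> real" where
  "mfw_step q A \<beta> c \<omega> k x = x + (\<Sum>i<q. \<beta> $ i * (mfw_stages A c \<omega> k x q ! i))"

fun mfw_iter :: "nat \<Rightarrow> real mat \<Rightarrow> real vec \<Rightarrow> real \<Rightarrow> real vec \<Rightarrow> nat \<Rightarrow> real" where
  "mfw_iter q A \<beta> c \<omega> 0 = 1"
| "mfw_iter q A \<beta> c \<omega> (Suc k) = mfw_step q A \<beta> c \<omega> k (mfw_iter q A \<beta> c \<omega> k)"

end

theory Submission
  imports Defs
begin

fun seqs :: "(nat \<Rightarrow> nat \<Rightarrow> real) \<Rightarrow> (nat \<Rightarrow> real) \<Rightarrow> real \<Rightarrow> nat \<Rightarrow> real list" where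
  "seqs M g a 0 = []"
| "seqs M g a (Suc i) = (let l = seqs M g a i in l @ [g i * (a + (\<Sum>j<i. M i j * l ! j))])"

lemma seqs_len: "length (seqs M g a n) = n"
  by (induct n) (auto simp: Let_def)

lemma seqs_nth: "i < n \<Longrightarrow> seqs M g a n ! i = seqs M g a (Suc i) ! i"
proof (induct n)
  case 0 then show ?case by simp
next
  case (Suc n)
  show ?case
  proof (cases "i < n")
    case True
    then show ?thesis using Suc by (simp add: Let_def nth_append seqs_len)
  next
    case False
    then have "i = n" using Suc by simp
    then show ?thesis by simp
  qed
qed

definition el where "el M g a i = seqs M g a (Suc i) ! i"

lemma el_rec: "el M g a i = g i * (a + (\<Sum>j<i. M i j * el M g a j))"
proof -
  have "el M g a i = g i * (a + (\<Sum>j<i. M i j * seqs M g a i ! j))"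
    by (simp add: el_def Let_def nth_append seqs_len)
  also have "(\<Sum>j<i. M i j * seqs M g a i ! j) = (\<Sum>j<i. M i j * el M g a j)"
    by (rule sum.cong) (auto simp: el_def seqs_nth)
  finally show ?thesis .
qed

definition st where "st A c \<omega> k x i = mfw_stages A c \<omega> k x (Suc i) ! i"

lemma st_len: "length (mfw_stages A c \<omega> k x n) = n"
  by (induct n) (auto simp: Let_def)

lemma st_nth: "i < n \<Longrightarrow> mfw_stages A c \<omega> k x n ! i = st A c \<omega> k x i"
proof (induct n)
  case 0 then show ?case by simp
next
  case (Suc n)
  show ?case
  proof (cases "i < n")
    case True
    then show ?thesis using Suc by (simp add: Let_def nth_append st_len)
  next
    case False
    then have "i = n" using Suc by simp
    then show ?thesis by (simp add: st_def)
  qed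
qed

lemma st_rec: "st A c \<omega> k x i = gam c \<omega> k i *
   (lmo (x + (\<Sum>j<i. A $$ (i,j) * st A c \<omega> k x j)) - (x + (\<Sum>j<i. A $$ (i,j) * st A c \<omega> k x j)))"
proof -
  have "(\<Sum>j<i. A $$ (i,j) * mfw_stages A c \<omega> k x i ! j) = (\<Sum>j<i. A $$ (i,j) * st A c \<omega> k x j)"
    by (rule sum.cong) (auto simp: st_nth)
  then show ?thesis
    by (simp add: st_def Let_def nth_append st_len)
qed

lemma step_st: "mfw_step q A \<beta> c \<omega> k x = x + (\<Sum>i<q. \<beta> $ i * st A c \<omega> k x i)"
  unfolding mfw_step_def by (simp add: st_nth)

lemma gam_lim: "((\<lambda>k. real k * gam c \<omega> k i) \<longlongrightarrow> c) sequentially"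
proof -
  have "((\<lambda>k::nat. c / (1 + (c + \<omega> $ i) / real k)) \<longlongrightarrow> c / (1 + 0)) sequentially"
    by (intro tendsto_intros) auto
  moreover have "eventually (\<lambda>k. c / (1 + (c + \<omega> $ i) / real k) = real k * gam c \<omega> k i) sequentially"
    using eventually_gt_at_top[of 0]
  proof eventually_elim
    case (elim k)
    then have "real k > 0" by simp
    then show ?case unfolding gam_def by (simp add: field_simps)
  qed
  ultimately show ?thesis by (simp add: tendsto_cong)
qed

lemma el_lim:
  assumes "\<And>i. ((\<lambda>k. real k * g k i) \<longlongrightarrow> c) sequentially"
  shows "((\<lambda>k. real k * el M (g k) a i) \<longlongrightarrow> c * a) sequentially"
proof (induct i rule: less_induct)
  case (less i)
  have z: "((\<lambda>k. el M (g k) a j) \<longlongrightarrow> 0) sequentially" if "j < i" for j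
  proof -
    have "((\<lambda>k. (real k * el M (g k) a j) * (1 / real k)) \<longlongrightarrow> (c * a) * 0) sequentially"
      by (intro tendsto_mult less that lim_1_over_n)
    moreover have "eventually (\<lambda>k. (real k * el M (g k) a j) * (1 / real k) = el M (g k) a j) sequentially"
      using eventually_gt_at_top[of 0] by eventually_elim simp
    ultimately show ?thesis using Lim_transform_eventually by fastforce
  qed
  have "((\<lambda>k. (real k * g k i) * (a + (\<Sum>j<i. M i j * el M (g k) a j))) \<longlongrightarrow> c * (a + (\<Sum>j<i. M i j * 0))) sequentially"
    by (intro tendsto_intros assms z) auto
  then show ?case by (subst el_rec) (simp add: mult.assoc)
qed


lemma same_sign:
  fixes x :: real
  assumes rb: "\<forall>i<n. real k * \<bar>\<Sum>j<i. A $$ (i,j) * el (\<lambda>i j. - A $$ (i,j)) (gam c \<omega> k) 1 j\<bar> \<le> B"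
  and kB: "4 * B \<le> real k" and xb: "2 * B < real k * \<bar>x\<bar>" and B0: "0 \<le> B"
  shows "i < n \<Longrightarrow> st A c \<omega> k x i = - (sgn x + x) * el (\<lambda>i j. - A $$ (i,j)) (gam c \<omega> k) 1 i"
proof (induct i rule: less_induct)
  case (less i)
  define E where "E = el (\<lambda>i j. - A $$ (i,j)) (gam c \<omega> k) 1"
  define s where "s = sgn x"
  define r where "r = (\<Sum>j<i. A $$ (i,j) * E j)"
  have IH: "\<And>j. j < i \<Longrightarrow> st A c \<omega> k x j = - (s + x) * E j"
    using less by (simp add: E_def s_def)
  have S: "(\<Sum>j<i. A $$ (i,j) * st A c \<omega> k x j) = - (s + x) * r"
    unfolding r_def sum_distrib_left by (rule sum.cong) (auto simp: IH)
  have kr: "real k * \<bar>r\<bar> \<le> B" using rb less(2) by (simp add: r_def E_def)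
  have kx: "real k * \<bar>x\<bar> > 0" using xb B0 by linarith
  then have "real k \<noteq> 0" by (metis mult_zero_left less_irrefl)
  then have kpos: "real k > 0" by simp
  have x0: "x \<noteq> 0" using kx by auto
  have sx: "\<bar>s + x\<bar> = 1 + \<bar>x\<bar>" using x0 by (auto simp: s_def sgn_if)
  have "real k * (\<bar>s + x\<bar> * \<bar>r\<bar>) = (1 + \<bar>x\<bar>) * (real k * \<bar>r\<bar>)" by (simp add: sx)
  also have "\<dots> \<le> (1 + \<bar>x\<bar>) * B" using kr by (intro mult_left_mono) auto
  also have "\<dots> < real k * \<bar>x\<bar>"
  proof -
    have "\<bar>x\<bar> * B \<le> \<bar>x\<bar> * (real k / 4)" using kB by (intro mult_left_mono) auto
    then have h2: "\<bar>x\<bar> * B \<le> real k * \<bar>x\<bar> / 4" by (simp add: algebra_simps)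
    have h1: "(1 + \<bar>x\<bar>) * B = B + \<bar>x\<bar> * B" by (simp add: algebra_simps)
    show ?thesis unfolding h1 using h2 xb kx by linarith
  qed
  finally have lt: "\<bar>s + x\<bar> * \<bar>r\<bar> < \<bar>x\<bar>" using kpos by simp
  define xb' where "xb' = x + - (s + x) * r"
  have "\<bar>xb' - x\<bar> < \<bar>x\<bar>" using lt by (simp add: xb'_def abs_mult abs_minus_commute add.commute)
  then have sg: "sgn xb' = s" using x0 by (auto simp: s_def sgn_if split: if_splits)
  have ER: "E i = gam c \<omega> k i * (1 - r)"
    unfolding E_def r_def by (subst el_rec) (simp add: sum_negf E_def)
  have "st A c \<omega> k x i = gam c \<omega> k i * (lmo xb' - xb')"
    by (subst st_rec) (simp add: S xb'_def)
  also have "\<dots> = - (s + x) * E i" unfolding ER lmo_def sg by (simp add: xb'_def algebra_simps)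
  finally show ?case by (simp add: s_def E_def)
qed

lemma small_bound:
  fixes x :: real
  assumes "\<bar>x\<bar> \<le> 1" and g0: "\<forall>i<n. gam c \<omega> k i \<ge> 0"
  shows "i < n \<Longrightarrow> \<bar>st A c \<omega> k x i\<bar> \<le> el (\<lambda>i j. \<bar>A $$ (i,j)\<bar>) (gam c \<omega> k) 2 i"
proof (induct i rule: less_induct)
  case (less i)
  define M where "M = el (\<lambda>i j. \<bar>A $$ (i,j)\<bar>) (gam c \<omega> k) 2"
  define xb where "xb = x + (\<Sum>j<i. A $$ (i,j) * st A c \<omega> k x j)"
  have "\<bar>\<Sum>j<i. A $$ (i,j) * st A c \<omega> k x j\<bar> \<le> (\<Sum>j<i. \<bar>A $$ (i,j) * st A c \<omega> k x j\<bar>)"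
    by (rule sum_abs)
  also have "\<dots> \<le> (\<Sum>j<i. \<bar>A $$ (i,j)\<bar> * M j)"
    by (rule sum_mono) (use less in \<open>auto simp: abs_mult M_def intro: mult_left_mono\<close>)
  finally have h: "\<bar>\<Sum>j<i. A $$ (i,j) * st A c \<omega> k x j\<bar> \<le> (\<Sum>j<i. \<bar>A $$ (i,j)\<bar> * M j)" .
  have l1: "\<bar>lmo xb\<bar> \<le> 1" by (simp add: lmo_def sgn_if)
  have "\<bar>lmo xb - xb\<bar> \<le> 2 + (\<Sum>j<i. \<bar>A $$ (i,j)\<bar> * M j)"
    using l1 h assms(1) unfolding xb_def by linarith
  then have "gam c \<omega> k i * \<bar>lmo xb - xb\<bar> \<le> gam c \<omega> k i * (2 + (\<Sum>j<i. \<bar>A $$ (i,j)\<bar> * M j))"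
    using g0 less(2) by (intro mult_left_mono) auto
  moreover have "M i = gam c \<omega> k i * (2 + (\<Sum>j<i. \<bar>A $$ (i,j)\<bar> * M j))"
    unfolding M_def by (subst el_rec) simp
  moreover have "\<bar>st A c \<omega> k x i\<bar> = gam c \<omega> k i * \<bar>lmo xb - xb\<bar>"
    using g0 less(2) by (subst st_rec) (simp add: abs_mult xb_def)
  ultimately show ?case by (simp add: M_def)
qed

lemma ln_step: "real k > 0 \<Longrightarrow> ln (real k + 1) \<le> ln (real k) + 1 / real k"
proof -
  assume k: "real k > 0"
  have "real k * (1 + 1 / real k) = real k + 1" using k by (simp add: distrib_left)
  then have "ln (real k + 1) = ln (real k * (1 + 1 / real k))" by simp
  also have "\<dots> = ln (real k) + ln (1 + 1 / real k)"
  proof -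
    have "1 + 1 / real k > 0" using k by (simp add: add_pos_pos)
    then show ?thesis using k by (simp add: ln_mult)
  qed
  also have "\<dots> \<le> ln (real k) + 1 / real k" using ln_add_one_self_le_self[of "1 / real k"] k by simp
  finally show ?thesis .
qed


theorem lemma3:
  fixes q :: nat and A :: "real mat" and \<beta> \<omega> :: "real vec" and c :: real
  assumes "q \<ge> 1"
    and "A \<in> carrier_mat q q"
    and "\<forall>i<q. \<forall>j<q. i \<le> j \<longrightarrow> A $$ (i,j) = 0"
    and "dim_vec \<beta> = q" and sb1: "(\<Sum>i<q. \<beta> $ i) = 1"
    and "dim_vec \<omega> = q" and "\<omega> $ 0 = 0"
    and cpos: "c > 0"
    and "\<forall>k. \<forall>i<q. 0 < (real q \<cdot>\<^sub>v (Pmat q A c \<omega> k *\<^sub>v \<beta>)) $ i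
                    \<and> (real q \<cdot>\<^sub>v (Pmat q A c \<omega> k *\<^sub>v \<beta>)) $ i < 1"
  shows "\<exists>k0 C2. C2 \<ge> 0 \<and> (\<forall>k>k0. \<bar>mfw_iter q A \<beta> c \<omega> k\<bar> \<le> C2 / real k)"
proof -
  define X where "X = mfw_iter q A \<beta> c \<omega>"
  have XS: "\<And>k. X (Suc k) = X k + (\<Sum>i<q. \<beta> $ i * st A c \<omega> k (X k) i)"
    by (simp add: X_def step_st)
  define \<eta> where "\<eta> k = el (\<lambda>i j. - A $$ (i,j)) (gam c \<omega> k) 1" for k
  define \<mu> where "\<mu> k = el (\<lambda>i j. \<bar>A $$ (i,j)\<bar>) (gam c \<omega> k) 2" for k
  define B where "B = 1 + (\<Sum>i<q. \<bar>\<Sum>j<i. A $$ (i,j) * c\<bar>)"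
  define Sb where "Sb = (\<Sum>i<q. \<bar>\<beta> $ i\<bar>)"
  define p where "p k = (\<Sum>i<q. \<beta> $ i * \<eta> k i)" for k
  define L where "L = 2 * B + 3 * c * Sb"
  define C where "C = 2 * L + 4 * c"
  have B1: "B \<ge> 1" unfolding B_def by (simp add: sum_nonneg)
  have Sb0: "Sb \<ge> 0" unfolding Sb_def by (simp add: sum_nonneg)
  have L0: "L \<ge> 2 * B" unfolding L_def using Sb0 cpos by simp
  have C0: "C \<ge> 0" "C \<ge> 2 * B" "C \<ge> 2 * L" "C \<ge> 4 * c" unfolding C_def using L0 B1 cpos by auto
  have gL: "\<And>i. ((\<lambda>k. real k * gam c \<omega> k i) \<longlongrightarrow> c) sequentially" by (rule gam_lim)
  have etaL: "((\<lambda>k. real k * \<eta> k i) \<longlongrightarrow> c) sequentially" for i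
    using el_lim[where g="\<lambda>k i. gam c \<omega> k i" and c=c and M="\<lambda>i j. - A $$ (i,j)" and a=1 and i=i, OF gL]
    by (simp add: \<eta>_def)
  have muL: "((\<lambda>k. real k * \<mu> k i) \<longlongrightarrow> c * 2) sequentially" for i
    using el_lim[where g="\<lambda>k i. gam c \<omega> k i" and c=c and M="\<lambda>i j. \<bar>A $$ (i,j)\<bar>" and a=2 and i=i, OF gL]
    by (simp add: \<mu>_def)
  have E1: "eventually (\<lambda>k. \<forall>i\<in>{..<q}. real k * \<bar>\<Sum>j<i. A $$ (i,j) * \<eta> k j\<bar> \<le> B) sequentially"
  proof (rule eventually_ball_finite, simp, intro ballI)
    fix i assume i: "i \<in> {..<q}"
    have "((\<lambda>k. \<bar>\<Sum>j<i. A $$ (i,j) * (real k * \<eta> k j)\<bar>) \<longlongrightarrow> \<bar>\<Sum>j<i. A $$ (i,j) * c\<bar>) sequentially"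
      by (intro tendsto_intros etaL)
    moreover have "\<bar>\<Sum>j<i. A $$ (i,j) * c\<bar> < B"
    proof -
      have "\<bar>\<Sum>j<i. A $$ (i,j) * c\<bar> \<le> (\<Sum>i<q. \<bar>\<Sum>j<i. A $$ (i,j) * c\<bar>)"
        using i by (intro member_le_sum) auto
      then show ?thesis unfolding B_def by simp
    qed
    ultimately have "eventually (\<lambda>k. \<bar>\<Sum>j<i. A $$ (i,j) * (real k * \<eta> k j)\<bar> < B) sequentially"
      by (rule order_tendstoD)
    then show "eventually (\<lambda>k. real k * \<bar>\<Sum>j<i. A $$ (i,j) * \<eta> k j\<bar> \<le> B) sequentially"
    proof eventually_elim
      case (elim k)
      have "real k * \<bar>\<Sum>j<i. A $$ (i,j) * \<eta> k j\<bar> = \<bar>\<Sum>j<i. A $$ (i,j) * (real k * \<eta> k j)\<bar>"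
      proof -
        have "real k * \<bar>\<Sum>j<i. A $$ (i,j) * \<eta> k j\<bar> = \<bar>real k * (\<Sum>j<i. A $$ (i,j) * \<eta> k j)\<bar>"
          by (simp add: abs_mult)
        also have "real k * (\<Sum>j<i. A $$ (i,j) * \<eta> k j) = (\<Sum>j<i. A $$ (i,j) * (real k * \<eta> k j))"
          by (simp add: sum_distrib_left algebra_simps)
        finally show ?thesis .
      qed
      then show ?case using elim by simp
    qed
  qed
  have pL: "((\<lambda>k. real k * p k) \<longlongrightarrow> c) sequentially"
  proof -
    have "((\<lambda>k. \<Sum>i<q. \<beta> $ i * (real k * \<eta> k i)) \<longlongrightarrow> (\<Sum>i<q. \<beta> $ i * c)) sequentially"
      by (intro tendsto_intros etaL)
    moreover have "(\<Sum>i<q. \<beta> $ i * c) = c" using sb1 by (simp add: sum_distrib_right[symmetric])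
    moreover have "(\<lambda>k. \<Sum>i<q. \<beta> $ i * (real k * \<eta> k i)) = (\<lambda>k. real k * p k)"
      by (auto simp: p_def sum_distrib_left algebra_simps)
    ultimately show ?thesis by simp
  qed
  have E2: "eventually (\<lambda>k. c / 2 < real k * p k \<and> real k * p k < 2 * c) sequentially"
    using order_tendstoD(1)[OF pL, of "c/2"] order_tendstoD(2)[OF pL, of "2*c"] cpos
    by (auto intro: eventually_conj)
  have E3: "eventually (\<lambda>k. \<forall>i\<in>{..<q}. real k * \<mu> k i < 3 * c \<and> 0 < real k * gam c \<omega> k i) sequentially"
  proof (rule eventually_ball_finite, simp, intro ballI eventually_conj)
    fix i
    show "eventually (\<lambda>k. real k * \<mu> k i < 3 * c) sequentially"
      using order_tendstoD(2)[OF muL, of "3*c"] cpos by auto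
    show "eventually (\<lambda>k. 0 < real k * gam c \<omega> k i) sequentially"
      using order_tendstoD(1)[OF gL, of 0] cpos by auto
  qed
  have E4: "eventually (\<lambda>k. 4 * B + 4 * c + 1 \<le> real k) sequentially"
    using eventually_ge_at_top[of "nat \<lceil>4 * B + 4 * c + 1\<rceil>"]
  proof eventually_elim
    case (elim k)
    then have "real (nat \<lceil>4 * B + 4 * c + 1\<rceil>) \<le> real k" by (rule of_nat_mono)
    moreover have "4 * B + 4 * c + 1 \<le> real (nat \<lceil>4 * B + 4 * c + 1\<rceil>)" by (rule real_nat_ceiling_ge)
    ultimately show ?case by linarith
  qed
  from eventually_conj[OF E1 eventually_conj[OF E2 eventually_conj[OF E3 E4]]]
  obtain K0 where K0: "\<And>k. k \<ge> K0 \<Longrightarrow>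
      (\<forall>i\<in>{..<q}. real k * \<bar>\<Sum>j<i. A $$ (i,j) * \<eta> k j\<bar> \<le> B) \<and>
      (c / 2 < real k * p k \<and> real k * p k < 2 * c) \<and>
      (\<forall>i\<in>{..<q}. real k * \<mu> k i < 3 * c \<and> 0 < real k * gam c \<omega> k i) \<and>
      4 * B + 4 * c + 1 \<le> real k"
    unfolding eventually_sequentially by blast
  have small: "real k * \<bar>X (Suc k)\<bar> \<le> L" if k: "k \<ge> K0" and xs: "real k * \<bar>X k\<bar> \<le> 2 * B" for k
  proof -
    note KK = K0[OF k]
    have k4: "4 * B + 4 * c + 1 \<le> real k" using KK by blast
    have kpos: "real k > 0" using KK B1 cpos by linarith
    have x1: "\<bar>X k\<bar> \<le> 1"
    proof -
      have "real k * \<bar>X k\<bar> \<le> real k * 1" using xs k4 B1 cpos by linarith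
      then show ?thesis using kpos by simp
    qed
    have g0: "\<forall>i<q. gam c \<omega> k i \<ge> 0"
    proof (intro allI impI)
      fix i assume "i < q"
      then have "0 < real k * gam c \<omega> k i" using KK by auto
      then show "gam c \<omega> k i \<ge> 0" using kpos by (simp add: zero_less_mult_iff)
    qed
    have sb: "\<bar>st A c \<omega> k (X k) i\<bar> \<le> \<mu> k i" if "i < q" for i
      using small_bound[OF x1 g0 that] by (simp add: \<mu>_def)
    have "\<bar>\<Sum>i<q. \<beta> $ i * st A c \<omega> k (X k) i\<bar> \<le> (\<Sum>i<q. \<bar>\<beta> $ i * st A c \<omega> k (X k) i\<bar>)"
      by (rule sum_abs)
    also have "\<dots> \<le> (\<Sum>i<q. \<bar>\<beta> $ i\<bar> * \<mu> k i)"
      by (rule sum_mono) (auto simp: abs_mult intro: mult_left_mono sb)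
    finally have h: "\<bar>\<Sum>i<q. \<beta> $ i * st A c \<omega> k (X k) i\<bar> \<le> (\<Sum>i<q. \<bar>\<beta> $ i\<bar> * \<mu> k i)" .
    have "\<bar>X (Suc k)\<bar> \<le> \<bar>X k\<bar> + (\<Sum>i<q. \<bar>\<beta> $ i\<bar> * \<mu> k i)"
      unfolding XS using h by linarith
    then have "real k * \<bar>X (Suc k)\<bar> \<le> real k * (\<bar>X k\<bar> + (\<Sum>i<q. \<bar>\<beta> $ i\<bar> * \<mu> k i))"
      using kpos by (intro mult_left_mono) auto
    also have "\<dots> = real k * \<bar>X k\<bar> + (\<Sum>i<q. \<bar>\<beta> $ i\<bar> * (real k * \<mu> k i))"
      by (simp add: algebra_simps sum_distrib_left)
    also have "(\<Sum>i<q. \<bar>\<beta> $ i\<bar> * (real k * \<mu> k i)) \<le> (\<Sum>i<q. \<bar>\<beta> $ i\<bar> * (3 * c))"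
    proof (intro sum_mono mult_left_mono)
      fix i assume "i \<in> {..<q}"
      then show "real k * \<mu> k i \<le> 3 * c" using KK by (meson less_imp_le)
    qed simp
    also have "(\<Sum>i<q. \<bar>\<beta> $ i\<bar> * (3 * c)) = 3 * c * Sb"
      by (simp add: Sb_def sum_distrib_right[symmetric])
    finally show ?thesis using xs unfolding L_def by linarith
  qed
  have large: "\<bar>X (Suc k)\<bar> \<le> p k \<or> \<bar>X (Suc k)\<bar> \<le> \<bar>X k\<bar> - p k"
    and pb: "0 < p k" "p k \<le> 1" "c / 2 < real k * p k" "real k * p k < 2 * c" "real k > 0"
    if k: "k \<ge> K0" and xs: "2 * B < real k * \<bar>X k\<bar>" for k
  proof -
    note KK = K0[OF k]
    have k4: "4 * B + 4 * c + 1 \<le> real k" using KK by blast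
    show kpos: "real k > 0" using KK B1 cpos by linarith
    show p1: "c / 2 < real k * p k" "real k * p k < 2 * c" using KK by auto
    have "0 < real k * p k" using p1 cpos by linarith
    then show p0: "0 < p k" using kpos by (simp add: zero_less_mult_iff)
    have "real k * p k \<le> real k" using p1 k4 B1 cpos by linarith
    then show pl: "p k \<le> 1" using kpos by (simp add: mult_le_cancel_left1)
    define x where "x = X k"
    have ss: "st A c \<omega> k x i = - (sgn x + x) * \<eta> k i" if "i < q" for i
      using same_sign[of q k A c \<omega> B x i] KK xs B1 that by (auto simp: \<eta>_def x_def)
    have "X (Suc k) = x + (\<Sum>i<q. \<beta> $ i * (- (sgn x + x) * \<eta> k i))"
      unfolding XS x_def[symmetric] by (intro arg_cong2[where f="(+)"] refl sum.cong) (auto simp: ss)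
    also have "\<dots> = x - (sgn x + x) * p k"
    proof -
      have "(\<Sum>i<q. \<beta> $ i * (- (sgn x + x) * \<eta> k i)) = - (sgn x + x) * p k"
        unfolding p_def sum_distrib_left by (rule sum.cong) (auto simp: algebra_simps)
      then show ?thesis by (simp add: algebra_simps)
    qed
    finally have XS': "X (Suc k) = x - (sgn x + x) * p k" .
    have "x \<noteq> 0" using xs B1 by (auto simp: x_def)
    then consider "x > 0" | "x < 0" by linarith
    then show "\<bar>X (Suc k)\<bar> \<le> p k \<or> \<bar>X (Suc k)\<bar> \<le> \<bar>X k\<bar> - p k"
    proof cases
      case 1
      have e: "X (Suc k) = x - p k - p k * x" using 1 unfolding XS' by (simp add: algebra_simps)
      have "0 \<le> p k * x" "p k * x \<le> x" using 1 p0 pl by (auto simp: mult_left_le_one_le)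
      then show ?thesis unfolding e using 1 by (auto simp: x_def)
    next
      case 2
      have e: "X (Suc k) = x + p k - p k * x" using 2 unfolding XS' by (simp add: algebra_simps)
      have "p k * x \<le> 0" using 2 p0 by (simp add: mult_pos_neg less_imp_le)
      moreover have "(1 - p k) * x \<le> 0" using 2 pl by (intro mult_nonneg_nonpos) auto
      then have "x \<le> p k * x" by (simp add: algebra_simps)
      ultimately have "p k * x \<le> 0" "x \<le> p k * x" by auto
      then show ?thesis unfolding e using 2 by (auto simp: x_def)
    qed
  qed
  define K1 where "K1 = max K0 (nat \<lceil>2 * C / c\<rceil>)"
  have K1a: "k \<ge> K0" if "k \<ge> K1" for k using that by (simp add: K1_def)
  have K1k: "real k \<ge> 1" if "k \<ge> K1" for k
    using K0[OF K1a[OF that]] B1 cpos by linarith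
  have K1c: "2 * C \<le> c * real k" if "k \<ge> K1" for k
  proof -
    have "real (nat \<lceil>2 * C / c\<rceil>) \<le> real k" using that by (simp add: K1_def)
    moreover have "2 * C / c \<le> real (nat \<lceil>2 * C / c\<rceil>)" by (rule real_nat_ceiling_ge)
    ultimately have "2 * C / c \<le> real k" by linarith
    then show ?thesis using cpos by (simp add: pos_divide_le_eq mult.commute)
  qed
  have b1c: "real (Suc k) * \<bar>X (Suc k)\<bar> \<le> 4 * c"
    if k: "k \<ge> K1" and xs: "2 * B < real k * \<bar>X k\<bar>" and h: "\<bar>X (Suc k)\<bar> \<le> p k" for k
  proof -
    note P = pb[OF K1a[OF k] xs]
    have "real (Suc k) * \<bar>X (Suc k)\<bar> \<le> real (Suc k) * p k" using h by (intro mult_left_mono) auto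
    also have "\<dots> = real k * p k + p k" by (simp add: algebra_simps)
    finally have a: "real (Suc k) * \<bar>X (Suc k)\<bar> \<le> real k * p k + p k" .
    have "p k \<le> real k * p k" using mult_right_mono[OF K1k[OF k], of "p k"] P(1) by simp
    then show ?thesis using a P by linarith
  qed
  have inv: "real (Suc k) * \<bar>X (Suc k)\<bar> \<le> C" if k: "k \<ge> K1" and xc: "real k * \<bar>X k\<bar> \<le> C" for k
  proof (cases "real k * \<bar>X k\<bar> \<le> 2 * B")
    case True
    have s: "real k * \<bar>X (Suc k)\<bar> \<le> L" by (rule small[OF K1a[OF k] True])
    have "real (Suc k) * \<bar>X (Suc k)\<bar> \<le> (2 * real k) * \<bar>X (Suc k)\<bar>"
      using K1k[OF k] by (intro mult_right_mono) auto
    then show ?thesis using s C0 by linarith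
  next
    case False
    then have xs: "2 * B < real k * \<bar>X k\<bar>" by simp
    note P = pb[OF K1a[OF k] xs]
    from large[OF K1a[OF k] xs] show ?thesis
    proof
      assume "\<bar>X (Suc k)\<bar> \<le> p k"
      then show ?thesis using b1c[OF k xs] C0 by linarith
    next
      assume h: "\<bar>X (Suc k)\<bar> \<le> \<bar>X k\<bar> - p k"
      have "real k * (2 * \<bar>X k\<bar>) \<le> real k * c" using xc K1c[OF k] by (simp add: algebra_simps)
      then have xh: "2 * \<bar>X k\<bar> \<le> c" using P(5) by simp
      have "real (Suc k) * \<bar>X (Suc k)\<bar> \<le> real (Suc k) * (\<bar>X k\<bar> - p k)" using h by (intro mult_left_mono) auto
      also have "\<dots> = real k * \<bar>X k\<bar> + \<bar>X k\<bar> - real k * p k - p k" by (simp add: algebra_simps)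
      finally show ?thesis using xc xh P by linarith
    qed
  qed
  have entry: "\<exists>k1\<ge>K1. real k1 * \<bar>X k1\<bar> \<le> C"
  proof (rule ccontr)
    assume "\<not> ?thesis"
    then have nc: "\<And>k. k \<ge> K1 \<Longrightarrow> C < real k * \<bar>X k\<bar>" by force
    have dec: "\<bar>X (Suc k)\<bar> \<le> \<bar>X k\<bar> - c / (2 * real k)" if k: "k \<ge> K1" for k
    proof -
      have xs: "2 * B < real k * \<bar>X k\<bar>" using nc[OF k] C0 by linarith
      note P = pb[OF K1a[OF k] xs]
      have "\<not> \<bar>X (Suc k)\<bar> \<le> p k"
        using b1c[OF k xs] nc[of "Suc k"] k C0 by force
      then have h: "\<bar>X (Suc k)\<bar> \<le> \<bar>X k\<bar> - p k" using large[OF K1a[OF k] xs] by blast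
      have "c / (2 * real k) < p k" using P by (simp add: pos_divide_less_eq algebra_simps)
      then show ?thesis using h by linarith
    qed
    have pot: "\<bar>X (K1 + n)\<bar> + c / 2 * ln (real (K1 + n)) \<le> \<bar>X K1\<bar> + c / 2 * ln (real K1)" for n
    proof (induct n)
      case 0 then show ?case by simp
    next
      case (Suc n)
      define k where "k = K1 + n"
      have kk: "k \<ge> K1" by (simp add: k_def)
      have kp: "real k > 0" using K1k[OF kk] by simp
      have l: "ln (real k + 1) \<le> ln (real k) + 1 / real k" by (rule ln_step[OF kp])
      have "c / 2 * ln (real k + 1) \<le> c / 2 * (ln (real k) + 1 / real k)"
        using l cpos by (intro mult_left_mono) auto
      also have "\<dots> = c / 2 * ln (real k) + c / (2 * real k)" by (simp add: algebra_simps)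
      finally have l2: "c / 2 * ln (real k + 1) \<le> c / 2 * ln (real k) + c / (2 * real k)" .
      have d: "\<bar>X (Suc k)\<bar> \<le> \<bar>X k\<bar> - c / (2 * real k)" by (rule dec[OF kk])
      have IH: "\<bar>X k\<bar> + c / 2 * ln (real k) \<le> \<bar>X K1\<bar> + c / 2 * ln (real K1)" using Suc by (simp add: k_def)
      have e: "K1 + Suc n = Suc k" by (simp add: k_def)
      show ?case unfolding e using l2 d IH by (simp add: add.commute)
    qed
    define Y where "Y = \<bar>X K1\<bar>"
    define T where "T = exp (ln (real K1) + 2 * Y / c + 1)"
    define n where "n = nat \<lceil>T\<rceil>"
    have T0: "T > 0" by (simp add: T_def)
    have "T \<le> real n" unfolding n_def by (rule real_nat_ceiling_ge)
    then have Tn: "T \<le> real (K1 + n)" by simp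
    have "ln T \<le> ln (real (K1 + n))" using Tn T0 by simp
    then have "ln (real K1) + 2 * Y / c + 1 \<le> ln (real (K1 + n))" by (simp add: T_def)
    then have "c / 2 * (ln (real K1) + 2 * Y / c + 1) \<le> c / 2 * ln (real (K1 + n))"
      using cpos by (intro mult_left_mono) auto
    also have "c / 2 * (ln (real K1) + 2 * Y / c + 1) = c / 2 * ln (real K1) + Y + c / 2"
      using cpos by (simp add: algebra_simps)
    finally have "c / 2 * ln (real K1) + Y + c / 2 \<le> c / 2 * ln (real (K1 + n))" .
    moreover have "\<bar>X (K1 + n)\<bar> \<ge> 0" by simp
    ultimately show False using pot[of n] cpos unfolding Y_def by linarith
  qed
  then obtain k1 where k1: "k1 \<ge> K1" "real k1 * \<bar>X k1\<bar> \<le> C" by blast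
  have all: "real k * \<bar>X k\<bar> \<le> C" if "k \<ge> k1" for k
    using that
  proof (induct k rule: dec_induct)
    case base then show ?case using k1 by simp
  next
    case (step m)
    then show ?case using inv[of m] k1 by simp
  qed
  show ?thesis
  proof (intro exI conjI allI impI)
    show "C \<ge> 0" using C0 by simp
    fix k assume "k1 < k"
    then have kp: "real k > 0" using K1k[of k] k1 by simp
    have "real k * \<bar>X k\<bar> \<le> C" using all \<open>k1 < k\<close> by simp
    then show "\<bar>mfw_iter q A \<beta> c \<omega> k\<bar> \<le> C / real k"
      using kp by (simp add: X_def pos_le_divide_eq mult.commute)
  qed
qed

end
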